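(* The set of all extreme points $x$ of $B_J$ for which the set of $x$-norming partitions has cardinality greater than $\aleph_0$ is uncountable.
   Context: For a real sequence $x=(x(n))_{n\in\mathbb N}$ let $\|x\|_J=\sup\bigl(\sum_{i=1}^n|\sum_{k\in I_i}x(k)|^2\bigr)^{1/2}$ over all $n$ and all families of pairwise disjoint intervals $I_1,\dots,I_n$ of $\mathbb N$ (intervals: nonempty sets of consecutive positive integers, possibly infinite). $J=\{x:\|x\|_J<\infty\}$ with closed unit ball $B_J$; for $x\in J$ and any interval $I$ the series $\sum_{k\in I}x(k)$ converges. $\mathrm{supp}(x)=\{n:x(n)\ne0\}$. A family of intervals $\mathcal I=\{I_i\}_{i\in F}$: $F=\{1,\dots,k\}$ or $F=\mathbb N$, each $I_i$ an interval, $\max I_i<\min I_{i+1}$ whenever $i+1\in F$; $\|x\|_{\mathcal I}=(\sum_{i\in F}|\sum_{k\in I_i}x(k)|^2)^{1/2}$; it is $x$-norming if $\|x\|_{\mathcal I}=\|x\|_J$. For nonempty $L\subset\mathbb N$, $\sup L=\max L$ if finite and $\infty$ otherwise. An $x$-norming partition is an $x$-norming family with $\{\min I_i,\max I_i\}\subset\mathrm{supp}(x)$ for all $i<\sup F$, and, if $F$ is finite, $\min I_i\in\mathrm{supp}(x)$ and $\sup I_i=\sup\mathrm{supp}(x)$ for $i=\sup F$. *)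

theory Defs
  imports "HOL-Analysis.Analysis" "HOL-Library.Extended_Nat"
begin

text \<open>Convention: the positive integers are modelled by nat (shifted by one);
  a real sequence is a function nat to real.\<close>

definition is_interval_nat :: "nat set \<Rightarrow> bool" where
  "is_interval_nat I \<longleftrightarrow> I \<noteq> {} \<and> (\<forall>a\<in>I. \<forall>c\<in>I. \<forall>b. a \<le> b \<and> b \<le> c \<longrightarrow> b \<in> I)"

definition isum :: "(nat \<Rightarrow> real) \<Rightarrow> nat set \<Rightarrow> real" where
  "isum x I = (\<Sum>k. if k \<in> I then x k else 0)"

definition normJ_sq :: "(nat \<Rightarrow> real) \<Rightarrow> ennreal" where
  "normJ_sq x = (SUP p \<in> {(n::nat, K::nat \<Rightarrow> nat set). (\<forall>i<n. is_interval_nat (K i)) \<and>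
        (\<forall>i<n. \<forall>j<n. i \<noteq> j \<longrightarrow> K i \<inter> K j = {})}.
      ennreal (\<Sum>i<fst p. (isum x (snd p i))\<^sup>2))"

definition inJ :: "(nat \<Rightarrow> real) \<Rightarrow> bool" where
  "inJ x \<longleftrightarrow> (\<forall>I. is_interval_nat I \<longrightarrow> summable (\<lambda>k. if k \<in> I then x k else 0))
              \<and> normJ_sq x < top"

definition normJ :: "(nat \<Rightarrow> real) \<Rightarrow> real" where
  "normJ x = sqrt (enn2real (normJ_sq x))"

definition ballJ :: "(nat \<Rightarrow> real) set" where
  "ballJ = {x. inJ x \<and> normJ x \<le> 1}"

definition extreme_pointJ :: "(nat \<Rightarrow> real) \<Rightarrow> (nat \<Rightarrow> real) set \<Rightarrow> bool" where
  "extreme_pointJ x S \<longleftrightarrow> x \<in> S \<and>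
     (\<forall>y\<in>S. \<forall>z\<in>S. \<forall>t::real. y \<noteq> z \<and> 0 < t \<and> t < 1 \<longrightarrow> x \<noteq> (\<lambda>n. (1 - t) * y n + t * z n))"

definition supp :: "(nat \<Rightarrow> real) \<Rightarrow> nat set" where
  "supp x = {n. x n \<noteq> 0}"

definition supN :: "nat set \<Rightarrow> enat" where
  "supN L = (if finite L then enat (Max L) else \<infinity>)"

text \<open>A family of intervals, indexed by F = {1..k} (k \<ge> 1) or F = {1..}, given as
  a pair (F, I); outside F the function I is {} (canonical representation).\<close>
definition interval_family :: "nat set \<Rightarrow> (nat \<Rightarrow> nat set) \<Rightarrow> bool" where
  "interval_family F I \<longleftrightarrow>
     ((\<exists>k\<ge>1. F = {1..k}) \<or> F = {1..}) \<and>
     (\<forall>i\<in>F. is_interval_nat (I i)) \<and>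
     (\<forall>i. i \<notin> F \<longrightarrow> I i = {}) \<and>
     (\<forall>i. i \<in> F \<and> i + 1 \<in> F \<longrightarrow> finite (I i) \<and> Max (I i) < Min (I (i + 1)))"

definition fam_sq :: "(nat \<Rightarrow> real) \<Rightarrow> nat set \<Rightarrow> (nat \<Rightarrow> nat set) \<Rightarrow> ennreal" where
  "fam_sq x F I = (\<Sum>i. ennreal (if i \<in> F then (isum x (I i))\<^sup>2 else 0))"

definition norming_family :: "(nat \<Rightarrow> real) \<Rightarrow> nat set \<Rightarrow> (nat \<Rightarrow> nat set) \<Rightarrow> bool" where
  "norming_family x F I \<longleftrightarrow> interval_family F I \<and> fam_sq x F I = normJ_sq x"

definition norming_partition :: "(nat \<Rightarrow> real) \<Rightarrow> nat set \<Rightarrow> (nat \<Rightarrow> nat set) \<Rightarrow> bool" where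
  "norming_partition x F I \<longleftrightarrow> norming_family x F I \<and>
     (\<forall>i\<in>F. enat i < supN F \<longrightarrow> {Min (I i), Max (I i)} \<subseteq> supp x) \<and>
     (finite F \<longrightarrow> Min (I (Max F)) \<in> supp x \<and> supN (I (Max F)) = supN (supp x))"

end

theory Submission
  imports Defs
begin

definition vv :: "nat \<Rightarrow> real" where
 "vv j = (if j=0 then 2 else if j=1 then -1 else if j=2 then 2 else if j=3 then -2 else if j=4 then 1 else -2)"
definition QQ :: "nat \<Rightarrow> real" where "QQ j = (\<Sum>l<j. vv l)"
definition WW :: "nat \<Rightarrow> real" where "WW j = (\<Sum>l<j. (vv l)^2)"

lemma QQ_vals: "QQ 0 = 0" "QQ 1 = 2" "QQ 2 = 1" "QQ 3 = 3" "QQ 4 = 1" "QQ 5 = 2" "QQ 6 = 0"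
  by (simp_all add: QQ_def vv_def eval_nat_numeral)
lemma WW_vals: "WW 0 = 0" "WW 1 = 4" "WW 2 = 5" "WW 3 = 9" "WW 4 = 13" "WW 5 = 14" "WW 6 = 18"
  by (simp_all add: WW_def vv_def eval_nat_numeral)

lemma le6_cases: "j \<le> (6::nat) \<Longrightarrow> j = 0 \<or> j = 1 \<or> j = 2 \<or> j = 3 \<or> j = 4 \<or> j = 5 \<or> j = 6"
  by auto

lemma QQS: "QQ (Suc j) = QQ j + vv j" by (simp add: QQ_def)
lemma QQ1: "QQ (Suc 0) = 2" using QQ_vals(2) by simp
lemma WW1: "WW (Suc 0) = 4" using WW_vals(2) by simp

lemma unit_check: "i \<le> j \<Longrightarrow> j \<le> 6 \<Longrightarrow> (QQ j - QQ i)^2 \<le> WW j - WW i"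
proof -
  assume a: "i \<le> j" "j \<le> 6"
  then have "i \<le> 6" by simp
  then have hi: "i = 0 \<or> i = 1 \<or> i = 2 \<or> i = 3 \<or> i = 4 \<or> i = 5 \<or> i = 6" by (rule le6_cases)
  from a(2) have hj: "j = 0 \<or> j = 1 \<or> j = 2 \<or> j = 3 \<or> j = 4 \<or> j = 5 \<or> j = 6" by (rule le6_cases)
  from hi hj a(1) show ?thesis
    by (elim disjE) (simp_all add: QQ_vals WW_vals QQ1 WW1)
qed

lemma QQ_nonneg: "j \<le> 6 \<Longrightarrow> 0 \<le> QQ j"
  by (drule le6_cases) (auto simp: QQ_vals QQ1)
lemma QQ_le3: "j \<le> 6 \<Longrightarrow> QQ j \<le> 3"
  by (drule le6_cases) (auto simp: QQ_vals QQ1)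

lemma sum_split_add: "(\<Sum>n<m+d. f n) = (\<Sum>n<m. f n) + (\<Sum>l<d. f (m+l))"
  for f :: "nat \<Rightarrow> real"
  by (induction d) (auto simp: add.assoc)

lemma sq_half: "((1/2::real)^k)^2 = (1/4)^k"
  by (simp add: power2_eq_square power_mult_distrib[symmetric])

definition cc :: "real \<Rightarrow> nat \<Rightarrow> real" where
 "cc u k = (if k = 0 then sqrt (u/18) else sqrt ((1-u)/6) * (1/2)^k)"
definition xx :: "real \<Rightarrow> nat \<Rightarrow> real" where "xx u n = cc u (n div 6) * vv (n mod 6)"
definition ss :: "real \<Rightarrow> nat \<Rightarrow> real" where "ss u n = (\<Sum>l<n. xx u l)"
definition sq :: "real \<Rightarrow> nat \<Rightarrow> real" where "sq u n = (\<Sum>l<n. (xx u l)^2)"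

lemma xx_block: "j < 6 \<Longrightarrow> xx u (6*k+j) = cc u k * vv j"
  by (simp add: xx_def)

lemma ss_block0: "j \<le> 6 \<Longrightarrow> ss u (6*k+j) = ss u (6*k) + cc u k * QQ j"
proof (induction j)
  case 0 then show ?case by (simp add: QQ_def)
next
  case (Suc j)
  have "ss u (6*k + Suc j) = ss u (6*k+j) + xx u (6*k+j)" by (simp add: ss_def)
  also have "\<dots> = ss u (6*k) + cc u k * QQ j + cc u k * vv j"
    using Suc by (simp add: xx_block)
  finally show ?case by (simp add: QQ_def algebra_simps)
qed

lemma ss_6k: "ss u (6*k) = 0"
proof (induction k)
  case 0 then show ?case by (simp add: ss_def)
next
  case (Suc k)
  have "ss u (6*Suc k) = ss u (6*k+6)" by (simp add: add.commute)
  also have "\<dots> = 0" using ss_block0[of 6 u k] Suc by (simp add: QQ_vals)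
  finally show ?case .
qed

lemma ss_block: "j \<le> 6 \<Longrightarrow> ss u (6*k+j) = cc u k * QQ j"
  using ss_block0 ss_6k by simp

lemma sq_block0: "j \<le> 6 \<Longrightarrow> sq u (6*k+j) = sq u (6*k) + (cc u k)^2 * WW j"
proof (induction j)
  case 0 then show ?case by (simp add: WW_def)
next
  case (Suc j)
  have "sq u (6*k + Suc j) = sq u (6*k+j) + (xx u (6*k+j))^2" by (simp add: sq_def)
  also have "\<dots> = sq u (6*k) + (cc u k)^2 * WW j + (cc u k)^2 * (vv j)^2"
    using Suc by (simp add: xx_block power_mult_distrib)
  finally show ?case by (simp add: WW_def algebra_simps)
qed

lemma sq_6k: "sq u (6*k) = (\<Sum>i<k. 18 * (cc u i)^2)"
proof (induction k)
  case 0 then show ?case by (simp add: sq_def)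
next
  case (Suc k)
  have "sq u (6*Suc k) = sq u (6*k+6)" by (simp add: add.commute)
  also have "\<dots> = sq u (6*k) + 18 * (cc u k)^2" using sq_block0[of 6 u k] by (simp add: WW_vals)
  finally show ?case using Suc by simp
qed

lemma group_sums:
  fixes f :: "nat \<Rightarrow> real"
  assumes nn: "\<And>n. 0 \<le> f n" and d: "0 < d" and lim: "(\<lambda>K. \<Sum>n<d*K. f n) \<longlonglongrightarrow> L"
  shows "f sums L"
proof -
  define S where "S N = (\<Sum>n<N. f n)" for N
  have incS: "incseq S" unfolding S_def incseq_def
    by (intro allI impI sum_mono2) (auto simp: nn)
  have inc2: "incseq (\<lambda>K. S (d*K))" using incS d unfolding incseq_def by simp
  have le: "S N \<le> L" for N
  proof -
    have "N \<le> d*N" using d by simp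
    then have "S N \<le> S (d*N)" using incS by (simp add: incseq_def)
    also have "\<dots> \<le> L" using incseq_le[OF inc2] lim unfolding S_def by auto
    finally show ?thesis .
  qed
  have summ: "summable f"
  proof (rule bounded_imp_summable[where B=L])
    fix n show "(\<Sum>k\<le>n. f k) \<le> L" using le[of "Suc n"] unfolding S_def
      by (simp add: lessThan_Suc_atMost)
  qed (rule nn)
  have "S \<longlonglongrightarrow> suminf f" using summable_LIMSEQ[OF summ] unfolding S_def .
  then have "(S \<circ> (\<lambda>K. d*K)) \<longlonglongrightarrow> suminf f"
    by (rule LIMSEQ_subseq_LIMSEQ) (simp add: strict_mono_def d)
  then have "(\<lambda>K. S (d*K)) \<longlonglongrightarrow> suminf f" by (simp add: o_def)
  moreover have "(\<lambda>K. S (d*K)) \<longlonglongrightarrow> L" using lim unfolding S_def .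
  ultimately have "L = suminf f" using LIMSEQ_unique by blast
  then show ?thesis using summ summable_sums by simp
qed


lemma isum_finite: "finite A \<Longrightarrow> isum x A = (\<Sum>k\<in>A. x k)"
  unfolding isum_def by (subst suminf_finite[of A]) (auto intro!: sum.cong)

lemma sum_ivl_diff: "a \<le> c \<Longrightarrow> (\<Sum>k\<in>{a..<c}. f k) = (\<Sum>k<c. f k) - (\<Sum>k<a. f k)"
  for f :: "nat \<Rightarrow> real"
  using sum.atLeastLessThan_concat[of 0 a c f] by (simp add: atLeast0LessThan)

lemma is_interval_ivl: "a \<le> b \<Longrightarrow> is_interval_nat {a..b}"
proof -
  assume ab: "a \<le> b"
  show ?thesis unfolding is_interval_nat_def
  proof (intro conjI ballI allI impI)
    show "{a..b} \<noteq> {}" using ab by simp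
    fix x y z assume "x \<in> {a..b}" "y \<in> {a..b}" "x \<le> z \<and> z \<le> y"
    then show "z \<in> {a..b}" by simp
  qed
qed

lemma interval_shape:
  assumes h: "is_interval_nat I"
  shows "(\<exists>a b. a \<le> b \<and> I = {a..b}) \<or> (\<exists>a. I = {a..})"
proof -
  have ne: "I \<noteq> {}" using h unfolding is_interval_nat_def by blast
  have cv: "\<And>a c b. a\<in>I \<Longrightarrow> c\<in>I \<Longrightarrow> a \<le> b \<Longrightarrow> b \<le> c \<Longrightarrow> b \<in> I"
    using h unfolding is_interval_nat_def by blast
  define a where "a = (LEAST n. n \<in> I)"
  have aI: "a \<in> I" using ne unfolding a_def by (metis LeastI ex_in_conv)
  have al: "\<And>n. n \<in> I \<Longrightarrow> a \<le> n" unfolding a_def by (rule Least_le)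
  show ?thesis
  proof (cases "finite I")
    case True
    define b where "b = Max I"
    have bI: "b \<in> I" using True ne unfolding b_def by simp
    have bl: "\<And>n. n \<in> I \<Longrightarrow> n \<le> b" using True unfolding b_def by simp
    have "I = {a..b}"
    proof
      show "I \<subseteq> {a..b}"
      proof
        fix n assume "n \<in> I" then show "n \<in> {a..b}" using al bl by simp
      qed
      show "{a..b} \<subseteq> I"
      proof
        fix n assume "n \<in> {a..b}" then show "n \<in> I" using cv[OF aI bI, of n] by simp
      qed
    qed
    then show ?thesis using al bI by blast
  next
    case False
    have "I = {a..}"
    proof
      show "I \<subseteq> {a..}" using al by auto
      show "{a..} \<subseteq> I"
      proof
        fix n assume "n \<in> {a..}"
        obtain c where c: "c \<ge> n" "c \<in> I" using False by (meson infinite_nat_iff_unbounded_le)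
        then show "n \<in> I" using cv[OF aI c(2), of n] \<open>n \<in> {a..}\<close> by simp
      qed
    qed
    then show ?thesis by blast
  qed
qed

lemma summable_restrict:
  fixes g :: "nat \<Rightarrow> real"
  assumes "summable g" "\<And>k. 0 \<le> g k"
  shows "summable (\<lambda>k. if k \<in> A then g k else 0)"
  by (rule summable_comparison_test[OF _ assms(1)]) (auto simp: assms(2))

lemma sum_disj_le:
  fixes c :: real and n :: nat
  assumes c: "0 \<le> c" and dj: "\<forall>i<n. \<forall>j<n. i \<noteq> j \<longrightarrow> K i \<inter> K j = {}"
  shows "(\<Sum>i<n. if k \<in> K i then c else 0) \<le> c"
proof (cases "\<exists>i0<n. k \<in> K i0")
  case True
  then obtain i0 where i0: "i0 < n" "k \<in> K i0" by blast
  have uq: "i = i0" if "i < n" "k \<in> K i" for i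
  proof (rule ccontr)
    assume ne: "i \<noteq> i0"
    have "K i \<inter> K i0 = {}" using dj that(1) i0(1) ne by simp
    then show False using that(2) i0(2) by (metis IntI empty_iff)
  qed
  have se: "{..<n} \<inter> {i. k \<in> K i} = {i0}"
  proof (rule set_eqI)
    fix i show "i \<in> {..<n} \<inter> {i. k \<in> K i} \<longleftrightarrow> i \<in> {i0}"
      using uq[of i] i0 by auto
  qed
  have "(\<Sum>i<n. if k \<in> K i then c else 0) = (\<Sum>i<n. if i \<in> {i. k \<in> K i} then c else 0)"
    by simp
  also have "\<dots> = (\<Sum>i\<in>{..<n} \<inter> {i. k \<in> K i}. c)"
    by (rule sum.inter_restrict[symmetric]) simp
  also have "\<dots> = c" unfolding se by simp
  finally show ?thesis by simp
next
  case False
  then have "(\<Sum>i<n. if k \<in> K i then c else 0) = 0" by (intro sum.neutral) auto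
  then show ?thesis using c by simp
qed

lemma singleton_bound: "ennreal (\<Sum>i<N. (y i)^2) \<le> normJ_sq y"
proof -
  have mem: "(N, \<lambda>i::nat. {i}) \<in> {(n::nat, K::nat \<Rightarrow> nat set). (\<forall>i<n. is_interval_nat (K i)) \<and>
        (\<forall>i<n. \<forall>j<n. i \<noteq> j \<longrightarrow> K i \<inter> K j = {})}"
    using is_interval_ivl[of i i for i] by simp
  have le: "ennreal (\<Sum>i<N. (y i)\<^sup>2) \<le> ennreal (\<Sum>i<fst (N, \<lambda>i::nat. {i}). (isum y (snd (N, \<lambda>i::nat. {i}) i))\<^sup>2)"
    by (simp add: isum_finite)
  show ?thesis unfolding normJ_sq_def by (rule SUP_upper2[where f="\<lambda>p. ennreal (\<Sum>i<fst p. (isum y (snd p i))\<^sup>2)", OF mem le])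
qed

lemma ball_l2:
  assumes "y \<in> ballJ"
  shows "summable (\<lambda>i. (y i)^2) \<and> (\<Sum>i. (y i)^2) \<le> 1"
proof -
  have fin: "normJ_sq y < top" and n1: "normJ y \<le> 1" using assms by (auto simp: ballJ_def inJ_def)
  obtain r where r: "r \<ge> 0" "normJ_sq y = ennreal r" using fin less_top_ennreal by blast
  have "sqrt r \<le> 1" using n1 r by (simp add: normJ_def)
  then have r1: "r \<le> 1" by simp
  have ps: "(\<Sum>i<N. (y i)^2) \<le> r" for N
    using singleton_bound[where N=N and y=y] r by (simp add: ennreal_le_iff)
  have sm: "summable (\<lambda>i. (y i)^2)"
  proof (rule bounded_imp_summable[where B=r])
    fix n show "(\<Sum>k\<le>n. (y k)^2) \<le> r" using ps[of "Suc n"] by (simp add: lessThan_Suc_atMost)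
  qed simp
  have "(\<Sum>i. (y i)^2) \<le> r" by (rule suminf_le_const[OF sm ps])
  then show ?thesis using sm r1 by simp
qed

lemma uncountable_nat_sets: "uncountable (UNIV :: nat set set)"
  unfolding uncountable_def using Cantors_theorem[of "UNIV :: nat set"] by simp

lemma Max_ivl: "a \<le> b \<Longrightarrow> Max {a..b} = (b::nat)" by (rule Max_eqI) auto
lemma Min_ivl: "a \<le> b \<Longrightarrow> Min {a..b} = (a::nat)" by (rule Min_eqI) auto

definition lof :: "bool \<Rightarrow> nat \<Rightarrow> nat" where "lof b j = (if b then j else if j = 0 then 0 else j+2)"
definition hif :: "bool \<Rightarrow> nat \<Rightarrow> nat" where
  "hif b j = (if b then (if j = 3 then 5 else j) else (if j = 0 then 2 else j+2))"
definition loS :: "nat set \<Rightarrow> nat \<Rightarrow> nat" where "loS S m = 6*(m div 4) + lof (m div 4 \<in> S) (m mod 4)"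
definition hiS :: "nat set \<Rightarrow> nat \<Rightarrow> nat" where "hiS S m = 6*(m div 4) + hif (m div 4 \<in> S) (m mod 4)"
definition IF :: "nat set \<Rightarrow> nat \<Rightarrow> nat set" where
  "IF S i = (if i = 0 then {} else {loS S (i-1)..hiS S (i-1)})"

lemma loS_eq: "j < 4 \<Longrightarrow> loS S (4*k+j) = 6*k + lof (k\<in>S) j" by (simp add: loS_def)
lemma hiS_eq: "j < 4 \<Longrightarrow> hiS S (4*k+j) = 6*k + hif (k\<in>S) j" by (simp add: hiS_def)

lemma lo_le_hi: "loS S m \<le> hiS S m"
  by (simp add: loS_def hiS_def lof_def hif_def)

lemma hi_lt_lo: "hiS S m < loS S (Suc m)"
proof -
  define k where "k = m div 4"
  define j where "j = m mod 4"
  have m: "m = 4*k+j" "j < 4" unfolding k_def j_def by simp_all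
  show ?thesis
  proof (cases "j = 3")
    case True
    have "Suc m = 4*Suc k + 0" using m True by simp
    then have "loS S (Suc m) = 6*Suc k + lof (Suc k \<in> S) 0" using loS_eq[of 0 S "Suc k"] by simp
    moreover have "hiS S m = 6*k + hif (k\<in>S) 3" using hiS_eq[of 3 S k] m True by simp
    ultimately show ?thesis by (simp add: lof_def hif_def)
  next
    case False
    have "Suc m = 4*k + Suc j" "Suc j < 4" using m False by simp_all
    then have "loS S (Suc m) = 6*k + lof (k \<in> S) (Suc j)" using loS_eq[of "Suc j" S k] by simp
    moreover have "hiS S m = 6*k + hif (k\<in>S) j" using hiS_eq[of j S k] m by simp
    ultimately show ?thesis using False m by (auto simp: lof_def hif_def)
  qed
qed

lemma sum4: "(\<Sum>l<4. f l) = f 0 + f 1 + f 2 + (f 3 :: real)" for f :: "nat \<Rightarrow> real"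
  by (simp add: eval_nat_numeral)

lemma unit_total: "(\<Sum>l<4. (QQ (Suc (hif b l)) - QQ (lof b l))^2) = 18"
  unfolding sum4 by (cases b) (simp_all add: lof_def hif_def QQ_vals QQS vv_def)

lemma interval_family_IF: "interval_family {1..} (IF S)"
  unfolding interval_family_def
proof (intro conjI allI impI ballI)
  show "(\<exists>k\<ge>1. {1::nat..} = {1..k}) \<or> {1::nat..} = {1..}" by simp
  fix i :: nat
  show "i \<in> {1..} \<Longrightarrow> is_interval_nat (IF S i)"
    by (auto simp: IF_def intro!: is_interval_ivl lo_le_hi)
  show "i \<notin> {1..} \<Longrightarrow> IF S i = {}" by (simp add: IF_def)
  assume "i \<in> {1..} \<and> i + 1 \<in> {1..}"
  then have i: "i \<noteq> 0" by simp
  show "finite (IF S i)" by (simp add: IF_def)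
  have "Max (IF S i) = hiS S (i-1)" using i by (simp add: IF_def Max_ivl lo_le_hi)
  moreover have "Min (IF S (i+1)) = loS S i" by (simp add: IF_def Min_ivl lo_le_hi)
  moreover have "hiS S (i-1) < loS S (Suc (i-1))" by (rule hi_lt_lo)
  ultimately show "Max (IF S i) < Min (IF S (i + 1))" using i by simp
qed

lemma IF_inj: "inj (\<lambda>S. ({1::nat..}, IF S))"
proof (rule injI)
  fix S T assume "({1::nat..}, IF S) = ({1..}, IF T)"
  then have e: "IF S = IF T" by simp
  show "S = T"
  proof (rule set_eqI)
    fix k
    have "IF S (Suc (4*k)) = IF T (Suc (4*k))" using e by simp
    then have "{loS S (4*k)..hiS S (4*k)} = {loS T (4*k)..hiS T (4*k)}" by (simp add: IF_def)
    then have "hiS S (4*k) = hiS T (4*k)"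
      by (metis Max_ivl lo_le_hi)
    then have "hif (k\<in>S) 0 = hif (k\<in>T) 0" using hiS_eq[of 0 S k] hiS_eq[of 0 T k] by simp
    then show "k \<in> S \<longleftrightarrow> k \<in> T" by (auto simp: hif_def split: if_splits)
  qed
qed

context
  fixes u :: real
  assumes u0: "0 < u" and u1: "u < 1"
begin

lemma cc_pos: "0 < cc u k"
  using u0 u1 by (simp add: cc_def)

lemma cc_sq: "(cc u k)^2 = (if k = 0 then u/18 else (1-u)/6 * (1/4)^k)"
  using u0 u1 by (simp add: cc_def power_mult_distrib sq_half)

lemma cc_sums: "(\<lambda>k. 18 * (cc u k)^2) sums 1"
proof -
  have eq: "(\<lambda>k. 18 * (cc u (Suc k))^2) = (\<lambda>k. (3*(1-u)/4) * (1/4)^k)"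
    by (rule ext) (simp add: cc_sq field_simps)
  have "(\<lambda>k. (3*(1-u)/4) * (1/4::real)^k) sums ((3*(1-u)/4) * (1 / (1 - 1/4)))"
    by (intro sums_mult geometric_sums) simp
  moreover have v: "(3*(1-u)/4) * (1 / (1 - 1/4::real)) = 1 - u" by simp
  ultimately have "(\<lambda>k. (3*(1-u)/4) * (1/4::real)^k) sums (1 - u)" by (simp only: v)
  then have "(\<lambda>k. 18 * (cc u (Suc k))^2) sums (1 - u)" unfolding eq by simp
  then have "(\<lambda>k. 18 * (cc u k)^2) sums (1 - u + 18 * (cc u 0)^2)"
    using sums_Suc_iff[of "\<lambda>k. 18 * (cc u k)^2" "1-u"] by blast
  then show ?thesis by (simp add: cc_sq)
qed

lemma xx_nz: "xx u n \<noteq> 0"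
  using cc_pos[of "n div 6"] by (simp add: xx_def vv_def)

lemma ss_nonneg: "0 \<le> ss u n"
proof -
  have "ss u n = ss u (6*(n div 6) + n mod 6)" by simp
  also have "\<dots> = cc u (n div 6) * QQ (n mod 6)" by (rule ss_block) simp
  finally show ?thesis using cc_pos[of "n div 6"] QQ_nonneg[of "n mod 6"] by simp
qed

lemma ss_bound: "\<bar>ss u n\<bar> \<le> 3 * cc u (n div 6)"
proof -
  have "ss u n = ss u (6*(n div 6) + n mod 6)" by simp
  also have "\<dots> = cc u (n div 6) * QQ (n mod 6)" by (rule ss_block) simp
  finally show ?thesis using cc_pos[of "n div 6"] QQ_nonneg[of "n mod 6"] QQ_le3[of "n mod 6"]
    by (simp add: abs_mult)
qed

lemma sq_sums: "(\<lambda>n. (xx u n)^2) sums 1"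
proof (rule group_sums[where d=6])
  have "(\<lambda>K. \<Sum>i<K. 18 * (cc u i)^2) \<longlonglongrightarrow> 1" using cc_sums by (simp add: sums_def)
  then show "(\<lambda>K. \<Sum>n<6*K. (xx u n)^2) \<longlonglongrightarrow> 1" using sq_6k by (simp add: sq_def)
qed auto

lemma sq_le1: "sq u n \<le> 1"
proof -
  have "incseq (sq u)" unfolding sq_def incseq_def by (intro allI impI sum_mono2) auto
  then show ?thesis using incseq_le sq_sums unfolding sums_def sq_def by blast
qed

lemma sq_mono: "a \<le> b \<Longrightarrow> sq u a \<le> sq u b"
  unfolding sq_def by (intro sum_mono2) auto

lemma cc_lim: "cc u \<longlonglongrightarrow> 0"
proof -
  have "(\<lambda>k. 18 * (cc u k)^2) \<longlonglongrightarrow> 0" using cc_sums summable_LIMSEQ_zero sums_summable by blast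
  then have "(\<lambda>k. (18 * (cc u k)^2) / 18) \<longlonglongrightarrow> 0 / 18" by (intro tendsto_divide) auto
  then have "(\<lambda>k. sqrt ((cc u k)^2)) \<longlonglongrightarrow> sqrt 0" by (intro tendsto_real_sqrt) simp
  then show ?thesis using cc_pos by (simp add: less_imp_le)
qed

lemma ss_lim: "ss u \<longlonglongrightarrow> 0"
proof -
  have fl: "filterlim (\<lambda>n::nat. n div 6) sequentially sequentially"
    unfolding filterlim_at_top eventually_sequentially
  proof (intro allI)
    fix Z :: nat
    show "\<exists>N. \<forall>n\<ge>N. Z \<le> n div 6"
    proof (intro exI[of _ "6*Z"] allI impI)
      fix n assume "6*Z \<le> n"
      then have "(6*Z) div 6 \<le> n div 6" by (rule div_le_mono)
      then show "Z \<le> n div 6" by simp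
    qed
  qed
  have "(\<lambda>n. cc u (n div 6)) \<longlonglongrightarrow> 0"
    using filterlim_compose[OF cc_lim fl] .
  then have "(\<lambda>n. 3 * cc u (n div 6)) \<longlonglongrightarrow> 0" by (simp add: tendsto_mult_right_zero)
  then show ?thesis
    by (rule Lim_null_comparison[rotated]) (simp add: ss_bound)
qed

lemma unit_ineq:
  assumes "6*k \<le> a" "a \<le> b" "b \<le> 6*k+6"
  shows "(ss u b - ss u a)^2 \<le> sq u b - sq u a"
proof -
  define i where "i = a - 6*k"
  define j where "j = b - 6*k"
  have ij: "a = 6*k+i" "b = 6*k+j" "i \<le> j" "j \<le> 6"
    using assms unfolding i_def j_def by auto
  have "(ss u b - ss u a)^2 = (cc u k)^2 * (QQ j - QQ i)^2"
    using ij by (simp add: ss_block power_mult_distrib[symmetric] right_diff_distrib)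
  also have "\<dots> \<le> (cc u k)^2 * (WW j - WW i)"
    using unit_check[OF ij(3,4)] by (intro mult_left_mono) auto
  also have "\<dots> = sq u b - sq u a"
    using ij by (simp add: sq_block0 right_diff_distrib)
  finally show ?thesis .
qed

lemma ivl_ineq:
  assumes "a \<le> b"
  shows "(ss u b - ss u a)^2 \<le> sq u b - sq u a"
proof (cases "b \<le> 6*(a div 6)+6")
  case True
  then show ?thesis using unit_ineq[of "a div 6" a b] assms by simp
next
  case False
  define k where "k = a div 6"
  define m where "m = b div 6"
  have e1: "a = 6*k + a mod 6" "b = 6*m + b mod 6" "a mod 6 < 6" "b mod 6 < 6"
    unfolding k_def m_def by simp_all
  have nb: "\<not> b \<le> 6*k+6" using False unfolding k_def .
  have km0: "6*m \<le> b" "b \<le> 6*m+6" "6*k \<le> a" "a \<le> 6*k+6"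
    using e1 by linarith+
  have "k < m" using e1 nb by linarith
  then have km: "6*k+6 \<le> 6*m" "6*m \<le> b" "b \<le> 6*m+6" "6*k \<le> a" "a \<le> 6*k+6"
    using km0 by auto
  have z1: "ss u (6*k+6) = 0" using ss_block[of 6 u k] by (simp add: QQ_vals)
  have z2: "ss u (6*m) = 0" by (rule ss_6k)
  have A: "(ss u (6*k+6) - ss u a)^2 \<le> sq u (6*k+6) - sq u a"
    using km by (intro unit_ineq) auto
  have B: "(ss u b - ss u (6*m))^2 \<le> sq u b - sq u (6*m)"
    using km by (intro unit_ineq) auto
  have C: "sq u (6*k+6) \<le> sq u (6*m)" using km by (intro sq_mono)
  have D: "0 \<le> ss u a * ss u b" using ss_nonneg by simp
  have "(ss u b - ss u a)^2 = (ss u b)^2 + (ss u a)^2 - 2 * (ss u a * ss u b)"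
    by (simp add: power2_eq_square algebra_simps)
  then show ?thesis using A B C D z1 z2 by simp
qed


lemma isum_ivl: "a \<le> b \<Longrightarrow> isum (xx u) {a..b} = ss u (Suc b) - ss u a"
  by (simp add: isum_finite atLeastLessThanSuc_atLeastAtMost[symmetric] sum_ivl_diff ss_def)

lemma isumsq_ivl: "a \<le> b \<Longrightarrow> isum (\<lambda>k. (xx u k)^2) {a..b} = sq u (Suc b) - sq u a"
  by (simp add: isum_finite atLeastLessThanSuc_atLeastAtMost[symmetric] sum_ivl_diff sq_def)

lemma tail_sums: "(\<lambda>k. if k \<in> {a..} then xx u k else 0) sums (- ss u a)"
  unfolding sums_def
proof -
  have ev: "\<forall>\<^sub>F N in sequentially. ss u N - ss u a = (\<Sum>k<N. if k \<in> {a..} then xx u k else 0)"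
    unfolding eventually_sequentially
  proof (intro exI[of _ a] allI impI)
    fix N assume "a \<le> N"
    have "(\<Sum>k<N. if k \<in> {a..} then xx u k else 0) = (\<Sum>k\<in>{..<N} \<inter> {a..}. xx u k)"
      by (simp add: sum.inter_restrict)
    also have "{..<N} \<inter> {a..} = {a..<N}" by auto
    finally show "ss u N - ss u a = (\<Sum>k<N. if k \<in> {a..} then xx u k else 0)"
      using \<open>a \<le> N\<close> by (simp add: sum_ivl_diff ss_def)
  qed
  have "(\<lambda>N. ss u N - ss u a) \<longlonglongrightarrow> 0 - ss u a" by (intro tendsto_diff ss_lim tendsto_const)
  then show "(\<lambda>n. \<Sum>k<n. if k \<in> {a..} then xx u k else 0) \<longlonglongrightarrow> - ss u a"
    using tendsto_cong[OF ev] by simp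
qed

lemma sq_summable: "summable (\<lambda>k. (xx u k)^2)" using sq_sums by (rule sums_summable)

lemma ivl_main:
  assumes "is_interval_nat I"
  shows "summable (\<lambda>k. if k \<in> I then xx u k else 0) \<and> (isum (xx u) I)^2 \<le> isum (\<lambda>k. (xx u k)^2) I"
  using interval_shape[OF assms]
proof
  assume "\<exists>a b. a \<le> b \<and> I = {a..b}"
  then obtain a b where ab: "a \<le> b" "I = {a..b}" by blast
  have "summable (\<lambda>k. if k \<in> I then xx u k else 0)"
    by (rule summable_finite[of I]) (auto simp: ab)
  moreover have "(isum (xx u) I)^2 \<le> isum (\<lambda>k. (xx u k)^2) I"
    using ab ivl_ineq[of a "Suc b"] by (simp add: isum_ivl isumsq_ivl)
  ultimately show ?thesis ..
next
  assume "\<exists>a. I = {a..}"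
  then obtain a where a: "I = {a..}" by blast
  have sm: "summable (\<lambda>k. if k \<in> I then xx u k else 0)" using tail_sums a sums_summable by blast
  have is1: "isum (xx u) I = - ss u a" unfolding isum_def a using tail_sums sums_unique by metis
  define b where "b = 6*(a div 6)+6"
  have ab: "a \<le> b" unfolding b_def by linarith
  have sb: "ss u b = 0" unfolding b_def using ss_block[of 6 u "a div 6"] by (simp add: QQ_vals)
  have "(ss u b - ss u a)^2 \<le> sq u b - sq u a" by (rule ivl_ineq[OF ab])
  also have "sq u b - sq u a = (\<Sum>k\<in>{a..<b}. if k \<in> I then (xx u k)^2 else 0)"
    using ab by (simp add: a sum_ivl_diff sq_def)
  also have "\<dots> \<le> isum (\<lambda>k. (xx u k)^2) I"
    unfolding isum_def
    by (rule sum_le_suminf) (auto intro!: summable_restrict sq_summable)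
  finally have "(isum (xx u) I)^2 \<le> isum (\<lambda>k. (xx u k)^2) I" using is1 sb by simp
  with sm show ?thesis ..
qed

lemma fam_le1:
  fixes n :: nat and K :: "nat \<Rightarrow> nat set"
  assumes iv: "\<forall>i<n. is_interval_nat (K i)" and dj: "\<forall>i<n. \<forall>j<n. i \<noteq> j \<longrightarrow> K i \<inter> K j = {}"
  shows "(\<Sum>i<n. (isum (xx u) (K i))^2) \<le> 1"
proof -
  define g where "g i k = (if k \<in> K i then (xx u k)^2 else 0)" for i k
  have sg: "summable (g i)" for i unfolding g_def by (intro summable_restrict sq_summable) simp
  have "(\<Sum>i<n. (isum (xx u) (K i))^2) \<le> (\<Sum>i<n. suminf (g i))"
  proof (rule sum_mono)
    fix i assume "i \<in> {..<n}"
    then show "(isum (xx u) (K i))^2 \<le> suminf (g i)"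
      using ivl_main[of "K i"] iv unfolding g_def isum_def by auto
  qed
  also have "\<dots> = (\<Sum>k. \<Sum>i<n. g i k)" by (rule suminf_sum[symmetric]) (rule sg)
  also have "\<dots> \<le> (\<Sum>k. (xx u k)^2)"
  proof (rule suminf_le)
    fix k show "(\<Sum>i<n. g i k) \<le> (xx u k)^2" unfolding g_def by (rule sum_disj_le[OF _ dj]) simp
  qed (auto intro!: summable_sum sg sq_summable)
  also have "\<dots> = 1" using sq_sums sums_unique by metis
  finally show ?thesis .
qed

lemma normJ_sq_xx: "normJ_sq (xx u) = 1"
proof -
  have le: "normJ_sq (xx u) \<le> 1"
    unfolding normJ_sq_def
  proof (rule SUP_least)
    fix p assume mem: "p \<in> {(n::nat, K::nat \<Rightarrow> nat set). (\<forall>i<n. is_interval_nat (K i)) \<and>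
        (\<forall>i<n. \<forall>j<n. i \<noteq> j \<longrightarrow> K i \<inter> K j = {})}"
    obtain n K where p: "p = (n, K)" by (cases p)
    have c1: "\<forall>i<n. is_interval_nat (K i)" and c2: "\<forall>i<n. \<forall>j<n. i \<noteq> j \<longrightarrow> K i \<inter> K j = {}"
      using mem p by auto
    show "ennreal (\<Sum>i<fst p. (isum (xx u) (snd p i))\<^sup>2) \<le> 1"
      using fam_le1[OF c1 c2] p by simp
  qed
  then have "normJ_sq (xx u) < top" by (simp add: le_less_trans)
  then obtain r where r: "r \<ge> 0" "normJ_sq (xx u) = ennreal r" using less_top_ennreal by blast
  have r1: "r \<le> 1" using le r by simp
  have ps: "(\<Sum>i<N. (xx u i)^2) \<le> r" for N
    using singleton_bound[where N=N and y="xx u"] r by (simp add: ennreal_le_iff)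
  have "(\<Sum>i. (xx u i)^2) \<le> r" by (rule suminf_le_const[OF sq_summable ps])
  then have "1 \<le> r" using sq_sums sums_unique by metis
  then show ?thesis using r r1 by simp
qed

lemma xx_ball: "xx u \<in> ballJ"
  unfolding ballJ_def inJ_def normJ_def
  using ivl_main normJ_sq_xx by simp

lemma xx_extreme: "extreme_pointJ (xx u) ballJ"
  unfolding extreme_pointJ_def
proof (intro conjI xx_ball ballI allI impI)
  fix y z t
  assume y: "y \<in> ballJ" and z: "z \<in> ballJ" and h: "y \<noteq> z \<and> 0 < t \<and> t < (1::real)"
  show "xx u \<noteq> (\<lambda>n. (1 - t) * y n + t * z n)"
  proof
    assume H: "xx u = (\<lambda>n. (1 - t) * y n + t * z n)"
    obtain sy: "summable (\<lambda>i. (y i)^2)" and Y: "(\<Sum>i. (y i)^2) \<le> 1" using ball_l2[OF y] by blast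
    obtain sz: "summable (\<lambda>i. (z i)^2)" and Z: "(\<Sum>i. (z i)^2) \<le> 1" using ball_l2[OF z] by blast
    have t: "0 < t" "t < 1" using h by auto
    have pos: "0 < t * (1 - t)" using t by simp
    have eq: "(y n - z n)^2 = ((1-t)*(y n)^2 + t*(z n)^2 - (xx u n)^2) / (t*(1-t))" for n
    proof -
      have xn: "xx u n = (1-t)*y n + t*z n" using H by simp
      have id: "(y n - z n)^2 * (t*(1-t)) = (1-t)*(y n)^2 + t*(z n)^2 - ((1-t)*y n + t*z n)^2"
        by (simp add: power2_eq_square algebra_simps)
      have nz: "t*(1-t) \<noteq> 0" using pos by linarith
      show ?thesis unfolding xn nonzero_eq_divide_eq[OF nz] by (rule id)
    qed
    have "(\<lambda>n. ((1-t)*(y n)^2 + t*(z n)^2 - (xx u n)^2) / (t*(1-t))) sums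
          (((1-t)*(\<Sum>i. (y i)^2) + t*(\<Sum>i. (z i)^2) - 1) / (t*(1-t)))"
      by (intro sums_divide sums_diff sums_add sums_mult summable_sums sy sz sq_sums)
    moreover have fe: "(\<lambda>n. (y n - z n)^2) = (\<lambda>n. ((1-t)*(y n)^2 + t*(z n)^2 - (xx u n)^2) / (t*(1-t)))"
      by (rule ext) (rule eq)
    ultimately have D: "(\<lambda>n. (y n - z n)^2) sums (((1-t)*(\<Sum>i. (y i)^2) + t*(\<Sum>i. (z i)^2) - 1) / (t*(1-t)))"
      by simp
    have num: "(1-t)*(\<Sum>i. (y i)^2) + t*(\<Sum>i. (z i)^2) - 1 \<le> 0"
    proof -
      have "(1-t)*(\<Sum>i. (y i)^2) \<le> (1-t)*1" using Y t by (intro mult_left_mono) auto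
      moreover have "t*(\<Sum>i. (z i)^2) \<le> t*1" using Z t by (intro mult_left_mono) auto
      ultimately show ?thesis by simp
    qed
    have SU: "(\<Sum>n. (y n - z n)^2) = ((1-t)*(\<Sum>i. (y i)^2) + t*(\<Sum>i. (z i)^2) - 1) / (t*(1-t))"
      using D by (rule sums_unique[symmetric])
    have "(\<Sum>n. (y n - z n)^2) \<le> 0" unfolding SU by (rule divide_nonpos_pos[OF num pos])
    moreover have smD: "summable (\<lambda>n. (y n - z n)^2)" using D by (rule sums_summable)
    moreover have "0 \<le> (\<Sum>n. (y n - z n)^2)" using smD by (rule suminf_nonneg) simp
    ultimately have "(\<Sum>n. (y n - z n)^2) = 0" by simp
    then have "\<forall>n. (y n - z n)^2 = 0" using suminf_eq_zero_iff[OF smD] by simp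
    then have "y = z" by auto
    then show False using h by simp
  qed
qed

lemma partition_IF: "norming_partition (xx u) {1..} (IF S)"
proof -
  define G where "G m = (ss u (Suc (hiS S m)) - ss u (loS S m))^2" for m
  have Gb: "G (4*K + l) = (cc u K)^2 * (QQ (Suc (hif (K\<in>S) l)) - QQ (lof (K\<in>S) l))^2" if "l < 4" for K l
  proof -
    have a: "lof (K\<in>S) l \<le> 6" "Suc (hif (K\<in>S) l) \<le> 6" using that by (auto simp: lof_def hif_def)
    have e1: "ss u (Suc (hiS S (4*K+l))) = cc u K * QQ (Suc (hif (K\<in>S) l))"
      using ss_block[of "Suc (hif (K\<in>S) l)" u K] a that by (simp add: hiS_eq)
    have e2: "ss u (loS S (4*K+l)) = cc u K * QQ (lof (K\<in>S) l)"
      using ss_block[of "lof (K\<in>S) l" u K] a that by (simp add: loS_eq)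
    show ?thesis unfolding G_def e1 e2 by (simp add: power2_eq_square algebra_simps)
  qed
  have Gs: "(\<Sum>m<4*K. G m) = (\<Sum>k<K. 18 * (cc u k)^2)" for K
  proof (induction K)
    case 0 then show ?case by simp
  next
    case (Suc K)
    have "(\<Sum>m<4*Suc K. G m) = (\<Sum>m<4*K. G m) + (\<Sum>l<4. G (4*K+l))"
      using sum_split_add[of G "4*K" 4] by (simp add: add.commute)
    also have "(\<Sum>l<4. G (4*K+l)) = (\<Sum>l<4. (cc u K)^2 * (QQ (Suc (hif (K\<in>S) l)) - QQ (lof (K\<in>S) l))^2)"
      by (rule sum.cong) (auto simp: Gb)
    also have "\<dots> = 18 * (cc u K)^2" by (simp add: sum_distrib_left[symmetric] unit_total)
    finally show ?case using Suc by simp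
  qed
  have "G sums 1"
  proof (rule group_sums[where d=4])
    show "(\<lambda>K. \<Sum>n<4*K. G n) \<longlonglongrightarrow> 1" unfolding Gs using cc_sums by (simp add: sums_def)
  qed (auto simp: G_def)
  define h where "h i = (if i \<in> {1::nat..} then (isum (xx u) (IF S i))^2 else 0)" for i
  have hG: "(\<lambda>m. h (Suc m)) = G"
    by (rule ext) (simp add: h_def G_def IF_def isum_ivl lo_le_hi)
  have "h sums 1" using \<open>G sums 1\<close> unfolding hG[symmetric] sums_Suc_iff by (simp add: h_def)
  then have "fam_sq (xx u) {1..} (IF S) = 1"
    unfolding fam_sq_def h_def[symmetric]
    by (subst suminf_ennreal2) (auto simp: h_def sums_summable sums_unique[symmetric])
  then have nf: "norming_family (xx u) {1..} (IF S)"
    unfolding norming_family_def using interval_family_IF normJ_sq_xx by simp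
  have "supp (xx u) = UNIV" unfolding supp_def using xx_nz by auto
  then show ?thesis unfolding norming_partition_def using nf infinite_Ici[of "1::nat"] by simp
qed

lemma partitions_uncountable: "uncountable {(F, I). norming_partition (xx u) F I}"
proof
  assume c: "countable {(F, I). norming_partition (xx u) F I}"
  have "(\<lambda>S. ({1::nat..}, IF S)) ` UNIV \<subseteq> {(F, I). norming_partition (xx u) F I}"
    using partition_IF by auto
  then have "countable ((\<lambda>S. ({1::nat..}, IF S)) ` UNIV)" using c countable_subset by blast
  then have "countable (UNIV :: nat set set)"
    using countable_image_inj_on IF_inj by blast
  then show False using uncountable_nat_sets by simp
qed

end

lemma xx_inj: "inj_on xx {0<..<1}"
proof (rule inj_onI)
  fix u v :: real assume u: "u \<in> {0<..<1}" and v: "v \<in> {0<..<1}" and e: "xx u = xx v"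
  have "xx u 0 = xx v 0" using e by simp
  then have "sqrt (u/18) = sqrt (v/18)" by (simp add: xx_def cc_def vv_def)
  then show "u = v" using u v by simp
qed

theorem proposition6p7:
  shows "uncountable {x. extreme_pointJ x ballJ \<and>
                        uncountable {(F, I). norming_partition x F I}}"
proof
  assume c: "countable {x. extreme_pointJ x ballJ \<and> uncountable {(F, I). norming_partition x F I}}"
  have "xx ` {0<..<1} \<subseteq> {x. extreme_pointJ x ballJ \<and> uncountable {(F, I). norming_partition x F I}}"
    using xx_extreme partitions_uncountable by auto
  then have "countable (xx ` {0<..<1})" using c countable_subset by blast
  then have "countable {0<..<(1::real)}" using countable_image_inj_on xx_inj by blast
  then show False using uncountable_open_interval[of 0 "1::real"] by simp
qed

end
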